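(* Let $q$ be a power series negligible to double factorial. Then the families $\big(\int_0^tq(e^{bs}x+w(s)+\widetilde W_s)ds\big)_{t\le T,x\in\mathbb{R}}$ and $\big(q(e^{bt}x+w(t)+\widetilde W_t)\big)_{t\le T,x\in\mathbb{R}}$ are estimable, and there exist a power series $\tilde q$ negligible to double factorial, depending only on $T$ and $q$, and a constant $C$ such that for all $t\in[0,T]$, $x\in\mathbb{R}$, \[ \mathbb{E}\Big[\Big|\int_0^tq(e^{bs}x+w(s)+\widetilde W_s)ds\Big|\Big]+\mathbb{E}\big[|q(e^{bt}x+w(t)+\widetilde W_t)|\big]\le|\tilde q|(|x|)+C. \]
   Context: Let $W$ be a Brownian motion, $a,b\in\mathbb{R}$, $c\ne0$, $T>0$. Set $w(t)=a\int_0^te^{b(t-s)}ds$, $\widetilde W_t=c\int_0^te^{b(t-s)}dW_s$, $\widetilde W^*_T=\sup_{s\le T}|\widetilde W_s|$. For a power series $q$, $|q|(x):=\sum_k|q_k|x^k$. A power series is negligible to double factorial if $\limsup_k(|q_k|(k-1)!!)^{1/k}=0$, $(-1)!!=0!!=1$. A family of processes $(M_t(x))_{t\le T,x\in\mathbb{R}}$ is estimable if there is a power series $r$ negligible to double factorial such that for all fixed $t\in[0,T]$, $x\in\mathbb{R}$, $|M_t(x)|\le|r|(|x|)+|r|(\widetilde W^*_T)$ a.s. *)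

theory Defs
  imports "HOL-Probability.Probability"
begin

text \<open>Since natural subtraction gives 0 - 1 = 0 and 0!! = 1, the term dfact (k - 1)
  equals the paper's (k-1)!! for all k, including the convention (-1)!! = 1.\<close>
fun dfact :: "nat \<Rightarrow> real" where
  "dfact 0 = 1"
| "dfact (Suc 0) = 1"
| "dfact (Suc (Suc n)) = real (Suc (Suc n)) * dfact n"

definition ps_eval :: "(nat \<Rightarrow> real) \<Rightarrow> real \<Rightarrow> real" where
  "ps_eval q x = (\<Sum>k. q k * x ^ k)"

definition ps_abs :: "(nat \<Rightarrow> real) \<Rightarrow> real \<Rightarrow> real" where
  "ps_abs q x = (\<Sum>k. \<bar>q k\<bar> * x ^ k)"

definition negligible_df :: "(nat \<Rightarrow> real) \<Rightarrow> bool" where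
  "negligible_df q \<longleftrightarrow> limsup (\<lambda>k. ereal (root k (\<bar>q k\<bar> * dfact (k - 1)))) = 0"

definition brownian_motion :: "'a measure \<Rightarrow> (real \<Rightarrow> 'a \<Rightarrow> real) \<Rightarrow> bool" where
  "brownian_motion M W \<longleftrightarrow>
     prob_space M \<and>
     (\<forall>t. W t \<in> borel_measurable M) \<and>
     (\<forall>\<omega>\<in>space M. W 0 \<omega> = 0 \<and> continuous_on {0..} (\<lambda>t. W t \<omega>)) \<and>
     (\<forall>s t. 0 \<le> s \<and> s < t \<longrightarrow>
        distributed M lborel (\<lambda>\<omega>. W t \<omega> - W s \<omega>)
          (\<lambda>y. ennreal (normal_density 0 (sqrt (t - s)) y))) \<and>
     (\<forall>(ts :: nat \<Rightarrow> real) n. (\<forall>i<n. 0 \<le> ts i \<and> ts i < ts (Suc i)) \<longrightarrow>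
        prob_space.indep_vars M (\<lambda>_. borel) (\<lambda>i \<omega>. W (ts (Suc i)) \<omega> - W (ts i) \<omega>) {..<n})"

definition wdet :: "real \<Rightarrow> real \<Rightarrow> real \<Rightarrow> real" where
  "wdet a b t = a * (LBINT s=0..t. exp (b * (t - s)))"

text \<open>The Wiener integral tilde W_t = c * int_0^t e^{b(t-s)} dW_s, with deterministic
  C^1 integrand, given pathwise via integration by parts:
  int_0^t e^{b(t-s)} dW_s = W_t + b * int_0^t e^{b(t-s)} W_s ds.\<close>
definition Wtil :: "real \<Rightarrow> real \<Rightarrow> (real \<Rightarrow> 'a \<Rightarrow> real) \<Rightarrow> real \<Rightarrow> 'a \<Rightarrow> real" where
  "Wtil c b W t \<omega> = c * (W t \<omega> + b * (LBINT s=0..t. exp (b * (t - s)) * W s \<omega>))"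

definition Wtil_star :: "real \<Rightarrow> real \<Rightarrow> (real \<Rightarrow> 'a \<Rightarrow> real) \<Rightarrow> real \<Rightarrow> 'a \<Rightarrow> real" where
  "Wtil_star c b W T \<omega> = (SUP s\<in>{0..T}. \<bar>Wtil c b W s \<omega>\<bar>)"

definition estimable :: "'a measure \<Rightarrow> real \<Rightarrow> real \<Rightarrow> (real \<Rightarrow> 'a \<Rightarrow> real) \<Rightarrow> real
     \<Rightarrow> (real \<Rightarrow> real \<Rightarrow> 'a \<Rightarrow> real) \<Rightarrow> bool" where
  "estimable M c b W T F \<longleftrightarrow>
     (\<exists>r. negligible_df r \<and>
        (\<forall>t\<in>{0..T}. \<forall>x. AE \<omega> in M.
           \<bar>F t x \<omega>\<bar> \<le> ps_abs r \<bar>x\<bar> + ps_abs r (Wtil_star c b W T \<omega>)))"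

end

theory Submission
  imports Defs
begin


lemma dfact_ge1: "dfact n \<ge> 1"
  by (induction n rule: dfact.induct) (auto intro: order_trans[OF _ mult_right_mono[of 1]])

lemma dfact_pos: "dfact n > 0"
  using dfact_ge1[of n] by linarith

lemma neg_eventually:
  assumes "negligible_df q" "\<epsilon> > 0"
  shows "eventually (\<lambda>k. root k (\<bar>q k\<bar> * dfact (k - 1)) < \<epsilon>) sequentially"
proof -
  have "limsup (\<lambda>k. ereal (root k (\<bar>q k\<bar> * dfact (k - 1)))) < ereal \<epsilon>"
    using assms unfolding negligible_df_def by simp
  from Limsup_lessD[OF this] show ?thesis by simp
qed

lemma neg_summable:
  assumes "negligible_df q" "R \<ge> 0"
  shows "summable (\<lambda>k. \<bar>q k\<bar> * R ^ k * dfact (k - 1))"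
proof -
  define e where "e = 1 / (2 * (R + 1))"
  have e: "e > 0" using assms by (simp add: e_def)
  have eR: "e * R \<le> 1/2" using assms by (simp add: e_def field_simps)
  have ev: "eventually (\<lambda>k. root k (\<bar>q k\<bar> * dfact (k - 1)) < e \<and> k > 0) sequentially"
    using eventually_conj[OF neg_eventually[OF assms(1) e] eventually_gt_at_top[of 0]] by simp
  have "eventually (\<lambda>k. norm (\<bar>q k\<bar> * R ^ k * dfact (k - 1)) \<le> (1/2) ^ k) sequentially"
  proof (rule eventually_mono[OF ev], clarify)
    fix k :: nat assume k: "root k (\<bar>q k\<bar> * dfact (k - 1)) < e" "k > 0"
    have nn: "0 \<le> \<bar>q k\<bar> * dfact (k - 1)" using dfact_pos[of "k-1"] by simp
    have "\<bar>q k\<bar> * dfact (k - 1) = (root k (\<bar>q k\<bar> * dfact (k - 1))) ^ k"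
      using k(2) nn by (simp add: real_root_pow_pos2)
    also have "\<dots> \<le> e ^ k"
      using k nn by (intro power_mono) (auto simp: real_root_ge_zero)
    finally have A: "\<bar>q k\<bar> * dfact (k - 1) \<le> e ^ k" .
    have "norm (\<bar>q k\<bar> * R ^ k * dfact (k - 1)) = (\<bar>q k\<bar> * dfact (k - 1)) * R ^ k"
      using assms(2) nn dfact_pos[of "k-1"] by (simp add: abs_mult)
    also have "\<dots> \<le> e ^ k * R ^ k" using A assms(2) by (intro mult_right_mono) auto
    also have "\<dots> = (e * R) ^ k" by (simp add: power_mult_distrib)
    also have "\<dots> \<le> (1/2) ^ k" using eR e assms(2) by (intro power_mono) auto
    finally show "norm (\<bar>q k\<bar> * R ^ k * dfact (k - 1)) \<le> (1/2) ^ k" .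
  qed
  then show ?thesis
    by (rule summable_comparison_test_ev) (simp add: summable_geometric)
qed

lemma neg_summable_abs:
  assumes "negligible_df q" "R \<ge> 0"
  shows "summable (\<lambda>k. \<bar>q k\<bar> * R ^ k)"
proof (rule summable_comparison_test[OF _ neg_summable[OF assms]])
  show "\<exists>N. \<forall>n\<ge>N. norm (\<bar>q n\<bar> * R ^ n) \<le> \<bar>q n\<bar> * R ^ n * dfact (n - 1)"
  proof (intro exI[of _ 0] allI impI)
    fix n :: nat
    have "\<bar>q n\<bar> * R ^ n * 1 \<le> \<bar>q n\<bar> * R ^ n * dfact (n - 1)"
      using assms(2) dfact_ge1 by (intro mult_left_mono) auto
    then show "norm (\<bar>q n\<bar> * R ^ n) \<le> \<bar>q n\<bar> * R ^ n * dfact (n - 1)"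
      using assms(2) by (simp add: abs_mult)
  qed
qed

lemma neg_summable_abs': 
  assumes "negligible_df q"
  shows "summable (\<lambda>k. \<bar>q k\<bar> * \<bar>y\<bar> ^ k)"
  using neg_summable_abs[OF assms, of "\<bar>y\<bar>"] by simp

lemma root_le_max1:
  assumes "k > 0" "C \<ge> 0"
  shows "root k C \<le> max 1 C"
proof -
  have "C \<le> max 1 C ^ k"
  proof -
    have "max 1 C ^ 1 \<le> max 1 C ^ k" using assms by (intro power_increasing) auto
    then show ?thesis by simp
  qed
  then have "root k C \<le> root k (max 1 C ^ k)" using assms by (simp add: real_root_le_iff)
  also have "\<dots> = max 1 C" using assms by (simp add: real_root_power_cancel)
  finally show ?thesis .
qed

lemma neg_scale:
  assumes q: "negligible_df q" and C: "0 \<le> C" and L: "0 \<le> L"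
    and r: "\<And>k. k \<ge> 1 \<Longrightarrow> \<bar>r k\<bar> \<le> C * L ^ k * \<bar>q k\<bar>"
  shows "negligible_df r"
  unfolding negligible_df_def
proof (rule antisym)
  show "0 \<le> limsup (\<lambda>k. ereal (root k (\<bar>r k\<bar> * dfact (k - 1))))"
    by (rule le_Limsup) (auto intro!: always_eventually real_root_ge_zero simp: dfact_pos less_imp_le)
  show "limsup (\<lambda>k. ereal (root k (\<bar>r k\<bar> * dfact (k - 1)))) \<le> 0"
  proof (rule ereal_le_epsilon2)
    fix e :: real assume e: "0 < e"
    define D where "D = max 1 C * L + 1"
    have "max 1 C * L \<ge> 0" using C L by (intro mult_nonneg_nonneg) auto
    then have D: "D > 0" "max 1 C * L \<le> D" by (auto simp: D_def)
    have ev: "eventually (\<lambda>k. root k (\<bar>q k\<bar> * dfact (k - 1)) < e / D \<and> k > 0) sequentially"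
      using eventually_conj[OF neg_eventually[OF q, of "e/D"] eventually_gt_at_top[of 0]] e D by simp
    have "eventually (\<lambda>k. ereal (root k (\<bar>r k\<bar> * dfact (k - 1))) \<le> 0 + ereal e) sequentially"
    proof (rule eventually_mono[OF ev], clarify)
      fix k :: nat assume k: "root k (\<bar>q k\<bar> * dfact (k - 1)) < e / D" "k > 0"
      have nn: "0 \<le> \<bar>q k\<bar> * dfact (k - 1)" using dfact_pos[of "k-1"] by simp
      have "root k (\<bar>r k\<bar> * dfact (k - 1)) \<le> root k (C * L ^ k * (\<bar>q k\<bar> * dfact (k - 1)))"
        using r[of k] k(2) dfact_pos[of "k-1"] by (auto simp: real_root_le_iff intro!: mult_right_mono)
      also have "\<dots> = root k C * L * root k (\<bar>q k\<bar> * dfact (k - 1))"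
        using k(2) L by (simp add: real_root_mult real_root_power_cancel)
      also have "\<dots> \<le> max 1 C * L * (e / D)"
        using k root_le_max1[OF k(2) C] L C nn
        by (intro mult_mono) (auto simp: real_root_ge_zero)
      also have "\<dots> \<le> D * (e / D)" using D e by (intro mult_right_mono) auto
      also have "\<dots> = e" using D by simp
      finally show "ereal (root k (\<bar>r k\<bar> * dfact (k - 1))) \<le> 0 + ereal e" by simp
    qed
    then show "limsup (\<lambda>k. ereal (root k (\<bar>r k\<bar> * dfact (k - 1)))) \<le> 0 + ereal e"
      by (rule Limsup_bounded)
  qed
qed




lemma ps_eval_le:
  assumes "negligible_df q"
  shows "\<bar>ps_eval q y\<bar> \<le> ps_abs q \<bar>y\<bar>"
proof -
  have s: "summable (\<lambda>k. norm (q k * y ^ k))"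
    using neg_summable_abs'[OF assms, of y] by (simp add: abs_mult power_abs)
  have "\<bar>ps_eval q y\<bar> = norm (\<Sum>k. q k * y ^ k)" by (simp add: ps_eval_def)
  also have "\<dots> \<le> (\<Sum>k. norm (q k * y ^ k))" by (rule summable_norm[OF s])
  also have "\<dots> = ps_abs q \<bar>y\<bar>" by (simp add: ps_abs_def abs_mult power_abs)
  finally show ?thesis .
qed

lemma ps_abs_nonneg:
  assumes "negligible_df q" "y \<ge> 0"
  shows "ps_abs q y \<ge> 0"
  unfolding ps_abs_def using neg_summable_abs[OF assms] assms(2)
  by (intro suminf_nonneg) auto

lemma ps_abs_mono:
  assumes "negligible_df q" "0 \<le> y" "y \<le> z"
  shows "ps_abs q y \<le> ps_abs q z"
  unfolding ps_abs_def
  using neg_summable_abs[OF assms(1), of y] neg_summable_abs[OF assms(1), of z] assms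
  by (intro suminf_le) (auto intro!: mult_left_mono power_mono)

lemma pow4:
  fixes a b c d :: real
  assumes "a \<ge> 0" "b \<ge> 0" "c \<ge> 0" "d \<ge> 0"
  shows "(a + b + c + d) ^ k \<le> (4 * a) ^ k + (4 * b) ^ k + (4 * c) ^ k + (4 * d) ^ k"
proof -
  define m where "m = max (max a b) (max c d)"
  have "(a + b + c + d) ^ k \<le> (4 * m) ^ k"
    using assms by (intro power_mono) (auto simp: m_def)
  also have "(4 * m) ^ k \<le> (4 * a) ^ k + (4 * b) ^ k + (4 * c) ^ k + (4 * d) ^ k"
  proof -
    have "4 * m = 4 * a \<or> 4 * m = 4 * b \<or> 4 * m = 4 * c \<or> 4 * m = 4 * d"
      by (auto simp: m_def max_def)
    moreover have "(4 * a) ^ k \<ge> 0" "(4 * b) ^ k \<ge> 0" "(4 * c) ^ k \<ge> 0" "(4 * d) ^ k \<ge> 0"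
      using assms by auto
    ultimately show ?thesis by auto
  qed
  finally show ?thesis .
qed

lemma ps_split4:
  assumes q: "negligible_df q" and nn: "a \<ge> 0" "b \<ge> 0" "c \<ge> 0" "d \<ge> 0"
    and y: "\<bar>y\<bar> \<le> a + b + c + d"
  shows "\<bar>ps_eval q y\<bar> \<le> ps_abs q (4 * a) + ps_abs q (4 * b) + ps_abs q (4 * c) + ps_abs q (4 * d)"
proof -
  note S = neg_summable_abs[OF q]
  have "\<bar>ps_eval q y\<bar> \<le> ps_abs q \<bar>y\<bar>" by (rule ps_eval_le[OF q])
  also have "\<dots> \<le> ps_abs q (a + b + c + d)" using y by (intro ps_abs_mono[OF q]) auto
  also have "\<dots> \<le> (\<Sum>k. \<bar>q k\<bar> * (4 * a) ^ k + \<bar>q k\<bar> * (4 * b) ^ k + \<bar>q k\<bar> * (4 * c) ^ k + \<bar>q k\<bar> * (4 * d) ^ k)"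
  proof -
    have "\<And>k. \<bar>q k\<bar> * (a + b + c + d) ^ k \<le> \<bar>q k\<bar> * (4 * a) ^ k + \<bar>q k\<bar> * (4 * b) ^ k + \<bar>q k\<bar> * (4 * c) ^ k + \<bar>q k\<bar> * (4 * d) ^ k"
    proof -
      fix k
      have "\<bar>q k\<bar> * (a + b + c + d) ^ k \<le> \<bar>q k\<bar> * ((4 * a) ^ k + (4 * b) ^ k + (4 * c) ^ k + (4 * d) ^ k)"
        by (intro mult_left_mono pow4 nn) simp
      then show "?thesis k" by (simp only: distrib_left)
    qed
    moreover have "summable (\<lambda>k. \<bar>q k\<bar> * (a + b + c + d) ^ k)" using nn by (intro S) simp
    moreover have "summable (\<lambda>k. \<bar>q k\<bar> * (4 * a) ^ k + \<bar>q k\<bar> * (4 * b) ^ k + \<bar>q k\<bar> * (4 * c) ^ k + \<bar>q k\<bar> * (4 * d) ^ k)"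
      using nn by (intro summable_add S) simp_all
    ultimately show ?thesis unfolding ps_abs_def by (rule suminf_le)
  qed
  also have "\<dots> = ps_abs q (4 * a) + ps_abs q (4 * b) + ps_abs q (4 * c) + ps_abs q (4 * d)"
    unfolding ps_abs_def using nn
    by (subst suminf_add[symmetric], (intro summable_add S; simp)+)+ simp
  finally show ?thesis .
qed

lemma ps_abs_r:
  assumes q: "negligible_df q" and "C \<ge> 0" "L \<ge> 0" "C0 \<ge> 0" "y \<ge> 0"
  shows "ps_abs (\<lambda>k. C * (L ^ k * \<bar>q k\<bar> + (if k = 0 then C0 else 0))) y = C * (ps_abs q (L * y) + C0)"
proof -
  have S: "summable (\<lambda>k. \<bar>q k\<bar> * (L * y) ^ k)" using neg_summable_abs[OF q] assms by simp
  have S2: "summable (\<lambda>k. (if k = 0 then C0 else 0) :: real)"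
    by (rule summable_finite[of "{0}"]) auto
  have "ps_abs (\<lambda>k. C * (L ^ k * \<bar>q k\<bar> + (if k = 0 then C0 else 0))) y
     = (\<Sum>k. C * (\<bar>q k\<bar> * (L * y) ^ k + (if k = 0 then C0 else 0)))"
    unfolding ps_abs_def using assms
    by (intro suminf_cong) (auto simp: abs_mult power_mult_distrib algebra_simps)
  also have "\<dots> = C * ((\<Sum>k. \<bar>q k\<bar> * (L * y) ^ k) + (\<Sum>k. (if k = 0 then C0 else 0)))"
  proof -
    have "(\<Sum>k. C * (\<bar>q k\<bar> * (L * y) ^ k + (if k = 0 then C0 else 0)))
        = C * (\<Sum>k. (\<bar>q k\<bar> * (L * y) ^ k + (if k = 0 then C0 else 0)))"
      by (rule suminf_mult[OF summable_add[OF S S2]])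
    also have "(\<Sum>k. (\<bar>q k\<bar> * (L * y) ^ k + (if k = 0 then C0 else 0)))
        = (\<Sum>k. \<bar>q k\<bar> * (L * y) ^ k) + (\<Sum>k. (if k = 0 then C0 else 0))"
      by (rule suminf_add[OF S S2, symmetric])
    finally show ?thesis .
  qed
  also have "(\<Sum>k. (if k = 0 then C0 else 0)) = C0"
    by (subst suminf_finite[of "{0}"]) auto
  finally show ?thesis by (simp add: ps_abs_def)
qed

lemma neg_r:
  assumes q: "negligible_df q" and "C \<ge> 0" "L \<ge> 0"
  shows "negligible_df (\<lambda>k. C * (L ^ k * \<bar>q k\<bar> + (if k = 0 then C0 else 0)))"
  using assms by (intro neg_scale[OF q, of C L]) (auto simp: abs_mult)




lemma LBINT_ennreal_bound:
  fixes f :: "real \<Rightarrow> real" and t :: real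
  assumes "t \<ge> 0"
  shows "ennreal \<bar>LBINT s=0..t. f s\<bar> \<le> (\<integral>\<^sup>+ s. indicator {0<..<t} s * ennreal \<bar>f s\<bar> \<partial>lborel)"
proof -
  have eq: "(LBINT s=0..t. f s) = integral\<^sup>L lborel (\<lambda>s. indicator {0<..<t} s *\<^sub>R f s)"
    using assms by (simp add: interval_lebesgue_integral_def einterval_def set_lebesgue_integral_def greaterThanLessThan_def greaterThan_def lessThan_def Int_def)
  show ?thesis
  proof (cases "integrable lborel (\<lambda>s. indicator {0<..<t} s *\<^sub>R f s)")
    case True
    have "ennreal \<bar>LBINT s=0..t. f s\<bar> = ennreal (norm (integral\<^sup>L lborel (\<lambda>s. indicator {0<..<t} s *\<^sub>R f s)))"
      by (simp add: eq)
    also have "\<dots> \<le> (\<integral>\<^sup>+ s. norm (indicator {0<..<t} s *\<^sub>R f s) \<partial>lborel)"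
      by (rule integral_norm_bound_ennreal[OF True])
    also have "\<dots> = (\<integral>\<^sup>+ s. indicator {0<..<t} s * ennreal \<bar>f s\<bar> \<partial>lborel)"
      by (intro nn_integral_cong) (auto simp: indicator_def)
    finally show ?thesis .
  next
    case False
    then show ?thesis by (simp add: eq not_integrable_integral_eq)
  qed
qed

lemma LBINT_bound:
  fixes f :: "real \<Rightarrow> real" and t :: real
  assumes "t \<ge> 0" "B \<ge> 0" "\<And>s. 0 < s \<Longrightarrow> s < t \<Longrightarrow> \<bar>f s\<bar> \<le> B"
  shows "\<bar>LBINT s=0..t. f s\<bar> \<le> t * B"
proof -
  have "ennreal \<bar>LBINT s=0..t. f s\<bar> \<le> (\<integral>\<^sup>+ s. indicator {0<..<t} s * ennreal \<bar>f s\<bar> \<partial>lborel)"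
    by (rule LBINT_ennreal_bound[OF assms(1)])
  also have "\<dots> \<le> (\<integral>\<^sup>+ s. ennreal B * indicator {0<..<t} s \<partial>lborel)"
    using assms by (intro nn_integral_mono) (auto simp: indicator_def)
  also have "\<dots> = ennreal B * ennreal t"
    using assms by (subst nn_integral_cmult_indicator) auto
  also have "\<dots> = ennreal (t * B)" using assms by (simp add: ennreal_mult' mult.commute)
  finally show ?thesis using assms by (simp add: ennreal_le_iff mult_nonneg_nonneg)
qed




lemma fact_dfact: "fact (Suc n) = dfact (Suc n) * dfact n"
proof (induction n rule: nat_less_induct)
  case (1 n)
  show ?case
  proof (cases n)
    case 0 then show ?thesis by simp
  next
    case (Suc m)
    have "fact (Suc n) = real (Suc n) * fact n" by simp
    also have "fact n = dfact (Suc m) * dfact m" using 1 Suc by auto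
    finally show ?thesis using Suc by simp
  qed
qed

lemma dfact_even: "dfact (2 * j) = 2 ^ j * fact j"
  by (induction j) (auto simp: numeral_eq_Suc algebra_simps)

lemma normal_abs_moment:
  assumes s: "\<sigma> > 0"
  shows "(\<integral>x. normal_density 0 \<sigma> x * \<bar>x\<bar> ^ k \<partial>lborel) \<le> \<sigma> ^ k * dfact (k - 1)"
proof (cases "even k")
  case True
  then obtain j where k: "k = 2 * j" by auto
  have "(\<integral>x. normal_density 0 \<sigma> x * \<bar>x\<bar> ^ k \<partial>lborel) = (\<integral>x. normal_density 0 \<sigma> x * (x - 0) ^ (2 * j) \<partial>lborel)"
    using True k by (simp add: power_even_abs)
  also have "\<dots> = fact (2 * j) / ((2 / \<sigma>\<^sup>2) ^ j * fact j)"
    by (rule integral_normal_moment_even[OF s])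
  also have "\<dots> = \<sigma> ^ k * dfact (k - 1)"
  proof (cases j)
    case 0 then show ?thesis using k by simp
  next
    case (Suc i)
    have f: "fact (2 * j) = dfact (2 * j) * dfact (2 * j - 1)"
      using fact_dfact[of "2 * j - 1"] Suc by simp
    have e: "dfact (2 * j) = 2 ^ j * fact j" by (rule dfact_even)
    have p: "(2 / \<sigma>\<^sup>2) ^ j = 2 ^ j / \<sigma> ^ k"
      using k by (simp add: power_divide power_mult)
    have "fact (2 * j) / ((2 / \<sigma>\<^sup>2) ^ j * fact j) = (2 ^ j * fact j * dfact (2 * j - 1)) / (2 ^ j / \<sigma> ^ k * fact j)"
      unfolding f e p ..
    also have "\<dots> = \<sigma> ^ k * dfact (2 * j - 1)" using s by (simp add: field_simps)
    finally show ?thesis using k by simp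
  qed
  finally show ?thesis by simp
next
  case False
  then obtain j where k: "k = 2 * j + 1" using oddE by blast
  have "(\<integral>x. normal_density 0 \<sigma> x * \<bar>x\<bar> ^ k \<partial>lborel) = (\<integral>x. normal_density 0 \<sigma> x * \<bar>x - 0\<bar> ^ (2 * j + 1) \<partial>lborel)"
    using k by simp
  also have "\<dots> = 2 ^ j * \<sigma> ^ (2 * j + 1) * fact j * sqrt (2 / pi)"
    by (rule integral_normal_moment_abs_odd[OF s])
  also have "\<dots> = \<sigma> ^ k * dfact (k - 1) * sqrt (2 / pi)"
    using k by (simp add: dfact_even)
  also have "\<dots> \<le> \<sigma> ^ k * dfact (k - 1) * 1"
    using s pi_ge_two dfact_pos[of "k - 1"] by (intro mult_left_mono) (auto simp: real_sqrt_le_1_iff)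
  finally show ?thesis by simp
qed




locale bmT =
  fixes M :: "'a measure" and W :: "real \<Rightarrow> 'a \<Rightarrow> real" and T :: real
  assumes bm: "brownian_motion M W" and Tpos: "T > 0"
begin

lemma prob: "prob_space M" using bm by (simp add: brownian_motion_def)

lemma Wmeas[measurable]: "W t \<in> borel_measurable M" using bm by (simp add: brownian_motion_def)

lemma W0: "\<omega> \<in> space M \<Longrightarrow> W 0 \<omega> = 0" using bm by (simp add: brownian_motion_def)

lemma Wcont: "\<omega> \<in> space M \<Longrightarrow> continuous_on {0..} (\<lambda>t. W t \<omega>)" using bm by (simp add: brownian_motion_def)

lemma Wdist: "0 < t \<Longrightarrow> distributed M lborel (\<lambda>\<omega>. W t \<omega> - W 0 \<omega>) (\<lambda>y. ennreal (normal_density 0 (sqrt t) y))"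
proof -
  assume t: "0 < t"
  have "\<forall>s t. 0 \<le> s \<and> s < t \<longrightarrow>
        distributed M lborel (\<lambda>\<omega>. W t \<omega> - W s \<omega>)
          (\<lambda>y. ennreal (normal_density 0 (sqrt (t - s)) y))"
    using bm by (simp add: brownian_motion_def)
  then have "distributed M lborel (\<lambda>\<omega>. W t \<omega> - W 0 \<omega>)
          (\<lambda>y. ennreal (normal_density 0 (sqrt (t - 0)) y))" using t by blast
  then show ?thesis by simp
qed

lemma Wcont_max: "\<omega> \<in> space M \<Longrightarrow> continuous_on UNIV (\<lambda>u. W (max 0 u) \<omega>)"
proof (rule continuous_on_compose2[OF Wcont])
  show "continuous_on UNIV (\<lambda>u::real. max 0 u)"
    by (intro continuous_on_max continuous_on_const continuous_on_id)
  show "(\<lambda>u::real. max 0 u) ` UNIV \<subseteq> {0..}" by auto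
qed simp_all

lemma Wmax_borel: "\<omega> \<in> space M \<Longrightarrow> (\<lambda>u. W (max 0 u) \<omega>) \<in> borel_measurable borel"
  using Wcont_max by (rule borel_measurable_continuous_onI)

lemma joint_meas: "(\<lambda>p. W (max 0 (fst p)) (snd p)) \<in> borel_measurable (lborel \<Otimes>\<^sub>M M)"
proof -
  define f where "f n p = W (max 0 (real_of_int \<lfloor>real (Suc n) * fst p\<rfloor> / real (Suc n))) (snd p)" for n p
  have fm: "f n \<in> borel_measurable (lborel \<Otimes>\<^sub>M M)" for n
  proof -
    have m1: "(\<lambda>p. real (Suc n) * fst p) \<in> borel_measurable (lborel \<Otimes>\<^sub>M M)"
      by (intro borel_measurable_times borel_measurable_const measurable_fst'' measurable_ident_sets) simp
    have m2: "(\<lambda>p. \<lfloor>real (Suc n) * fst p\<rfloor>) \<in> lborel \<Otimes>\<^sub>M M \<rightarrow>\<^sub>M count_space UNIV"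
      using measurable_compose[OF m1 measurable_real_floor] by (simp add: o_def)
    have m3: "(\<lambda>p. W (max 0 (real_of_int j / real (Suc n))) (snd p)) \<in> borel_measurable (lborel \<Otimes>\<^sub>M M)" for j :: int
      by (rule measurable_compose[OF measurable_snd Wmeas])
    have "(\<lambda>p. (\<lambda>j p. W (max 0 (real_of_int j / real (Suc n))) (snd p)) (\<lfloor>real (Suc n) * fst p\<rfloor>) p)
          \<in> borel_measurable (lborel \<Otimes>\<^sub>M M)"
      by (rule measurable_compose_countable'[where I=UNIV, OF m3 m2]) auto
    then show ?thesis by (simp add: f_def[abs_def])
  qed
  have fl: "(\<lambda>i. f i p) \<longlonglongrightarrow> W (max 0 (fst p)) (snd p)" if p: "p \<in> space (lborel \<Otimes>\<^sub>M M)" for p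
  proof -
  from p have om: "snd p \<in> space M" by (auto simp: space_pair_measure)
  define s where "s = fst p"
  define a where "a n = real_of_int \<lfloor>real (Suc n) * s\<rfloor> / real (Suc n)" for n
  have "a \<longlonglongrightarrow> s"
  proof (rule tendsto_sandwich[where f="\<lambda>n. s - 1 / real (Suc n)" and h="\<lambda>n. s"])
    show "\<forall>\<^sub>F n in sequentially. s - 1 / real (Suc n) \<le> a n"
    proof (intro always_eventually allI)
      fix n
      have N: "real (Suc n) > 0" by simp
      have "s - 1 / real (Suc n) = (real (Suc n) * s - 1) / real (Suc n)" using N by (simp add: field_simps)
      also have "\<dots> \<le> real_of_int \<lfloor>real (Suc n) * s\<rfloor> / real (Suc n)"
        using N by (intro divide_right_mono) linarith+
      finally show "s - 1 / real (Suc n) \<le> a n" by (simp add: a_def)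
    qed
    show "\<forall>\<^sub>F n in sequentially. a n \<le> s"
    proof (intro always_eventually allI)
      fix n
      have N: "real (Suc n) > 0" by simp
      have "a n \<le> (real (Suc n) * s) / real (Suc n)"
        unfolding a_def using N by (intro divide_right_mono) linarith+
      also have "\<dots> = s" using N by simp
      finally show "a n \<le> s" .
    qed
    show "(\<lambda>n. s - 1 / real (Suc n)) \<longlonglongrightarrow> s"
      using LIMSEQ_Suc[OF tendsto_diff[OF tendsto_const[of s] lim_inverse_n']] by (simp add: inverse_eq_divide)
  qed simp
  then have "(\<lambda>n. max 0 (a n)) \<longlonglongrightarrow> max 0 s" by (intro tendsto_intros)
  then have "(\<lambda>n. W (max 0 (a n)) (snd p)) \<longlonglongrightarrow> W (max 0 s) (snd p)"
    by (rule continuous_on_tendsto_compose[OF Wcont[OF om]]) auto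
  then show "(\<lambda>i. f i p) \<longlonglongrightarrow> W (max 0 (fst p)) (snd p)"
    by (simp add: f_def a_def s_def o_def)
  qed
  show ?thesis
    apply (rule borel_measurable_LIMSEQ_real[where u=f])
     apply (erule fl)
    apply (rule fm)
    done
qed

lemma moment:
  assumes "0 \<le> s"
  shows "(\<integral>\<^sup>+\<omega>. ennreal (\<bar>W s \<omega>\<bar> ^ k) \<partial>M) \<le> ennreal (sqrt s ^ k * dfact (k - 1))"
proof (cases "s = 0")
  case True
  interpret prob_space M by (rule prob)
  have "(\<integral>\<^sup>+\<omega>. ennreal (\<bar>W s \<omega>\<bar> ^ k) \<partial>M) = (\<integral>\<^sup>+\<omega>. ennreal (0 ^ k) \<partial>M)"
    using True W0 by (intro nn_integral_cong) auto
  also have "\<dots> = ennreal (0 ^ k)" by (simp add: emeasure_space_1)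
  also have "\<dots> \<le> ennreal (sqrt s ^ k * dfact (k - 1))"
    using True dfact_ge1[of "k-1"] by (cases k) auto
  finally show ?thesis .
next
  case False
  then have s: "s > 0" using assms by auto
  have "(\<integral>\<^sup>+\<omega>. ennreal (\<bar>W s \<omega>\<bar> ^ k) \<partial>M) = (\<integral>\<^sup>+\<omega>. (\<lambda>y. ennreal (\<bar>y\<bar> ^ k)) (W s \<omega> - W 0 \<omega>) \<partial>M)"
    using W0 by (intro nn_integral_cong) auto
  also have "\<dots> = (\<integral>\<^sup>+y. ennreal (normal_density 0 (sqrt s) y) * ennreal (\<bar>y\<bar> ^ k) \<partial>lborel)"
    by (rule distributed_nn_integral[OF Wdist[OF s], symmetric]) simp
  also have "\<dots> = (\<integral>\<^sup>+y. ennreal (normal_density 0 (sqrt s) y * \<bar>y\<bar> ^ k) \<partial>lborel)"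
    by (intro nn_integral_cong) (simp add: ennreal_mult')
  also have "\<dots> = ennreal (\<integral>y. normal_density 0 (sqrt s) y * \<bar>y\<bar> ^ k \<partial>lborel)"
  proof -
    have "integrable lborel (\<lambda>y. normal_density 0 (sqrt s) y * \<bar>y\<bar> ^ k)"
      using integrable_normal_moment_abs[where \<mu>=0 and \<sigma>="sqrt s" and k=k] s by simp
    then show ?thesis by (intro nn_integral_eq_integral) auto
  qed
  also have "\<dots> \<le> ennreal (sqrt s ^ k * dfact (k - 1))"
    using s by (intro ennreal_leI normal_abs_moment) auto
  finally show ?thesis .
qed

end




lemma tangent_pow:
  fixes h m :: real
  assumes h: "0 \<le> h" and m: "0 \<le> m"
  shows "m ^ k + real k * m ^ (k - 1) * h \<le> h ^ k + real k * m ^ k"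
proof (cases k)
  case 0 then show ?thesis by simp
next
  case (Suc j)
  have mk: "real k * m ^ k = real k * m ^ (k - 1) * m" using Suc by simp
  have key: "real k * m ^ (k - 1) * (h - m) \<le> h ^ k - m ^ k"
  proof -
    have eq: "h ^ k - m ^ k = (h - m) * (\<Sum>i<k. m ^ (k - Suc i) * h ^ i)"
      by (rule power_diff_sumr2)
    have pw: "m ^ (k - Suc i) * m ^ i = m ^ (k - 1)" if "i < k" for i
      using that by (simp add: power_add[symmetric])
    show ?thesis
    proof (cases "m \<le> h")
      case True
      have "(\<Sum>i<k. m ^ (k - 1)) \<le> (\<Sum>i<k. m ^ (k - Suc i) * h ^ i)"
      proof (rule sum_mono)
        fix i assume "i \<in> {..<k}"
        then have "m ^ (k - 1) = m ^ (k - Suc i) * m ^ i" using pw by simp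
        also have "\<dots> \<le> m ^ (k - Suc i) * h ^ i"
          using True m by (intro mult_left_mono power_mono) auto
        finally show "m ^ (k - 1) \<le> m ^ (k - Suc i) * h ^ i" .
      qed
      then have "(h - m) * (real k * m ^ (k - 1)) \<le> (h - m) * (\<Sum>i<k. m ^ (k - Suc i) * h ^ i)"
        using True by (intro mult_left_mono) auto
      then show ?thesis unfolding eq by (simp add: algebra_simps)
    next
      case False
      have "(\<Sum>i<k. m ^ (k - Suc i) * h ^ i) \<le> (\<Sum>i<k. m ^ (k - 1))"
      proof (rule sum_mono)
        fix i assume "i \<in> {..<k}"
        have "m ^ (k - Suc i) * h ^ i \<le> m ^ (k - Suc i) * m ^ i"
          using False h m by (intro mult_left_mono power_mono) auto
        also have "\<dots> = m ^ (k - 1)" using pw \<open>i \<in> {..<k}\<close> by simp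
        finally show "m ^ (k - Suc i) * h ^ i \<le> m ^ (k - 1)" .
      qed
      then have "(h - m) * (real k * m ^ (k - 1)) \<le> (h - m) * (\<Sum>i<k. m ^ (k - Suc i) * h ^ i)"
        using False by (intro mult_left_mono_neg) auto
      then show ?thesis unfolding eq by (simp add: algebra_simps)
    qed
  qed
  have "real k * m ^ (k - 1) * h = real k * m ^ (k - 1) * (h - m) + real k * m ^ k"
    by (subst mk) (simp add: algebra_simps)
  then show ?thesis using key by linarith
qed

context bmT
begin

definition Ienn :: "'a \<Rightarrow> ennreal" where
  "Ienn \<omega> = (\<integral>\<^sup>+ u. indicator {0..T} u * ennreal \<bar>W (max 0 u) \<omega>\<bar> \<partial>lborel)"

definition Ir :: "'a \<Rightarrow> real" where "Ir \<omega> = enn2real (Ienn \<omega>)"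

definition J :: "nat \<Rightarrow> 'a \<Rightarrow> ennreal" where
  "J k \<omega> = (\<integral>\<^sup>+ u. indicator {0..T} u * ennreal (\<bar>W (max 0 u) \<omega>\<bar> ^ k) \<partial>lborel)"

lemma path_bdd:
  assumes "\<omega> \<in> space M"
  obtains S where "S \<ge> 0" "\<And>u. u \<in> {0..T} \<Longrightarrow> \<bar>W u \<omega>\<bar> \<le> S"
proof -
  have "continuous_on {0..T} (\<lambda>u. W u \<omega>)"
    using Wcont[OF assms] by (rule continuous_on_subset) auto
  then have "compact ((\<lambda>u. W u \<omega>) ` {0..T})" by (rule compact_continuous_image[OF _ compact_Icc])
  then obtain B where B: "\<And>y. y \<in> (\<lambda>u. W u \<omega>) ` {0..T} \<Longrightarrow> norm y \<le> B"
    using compact_imp_bounded bounded_iff by metis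
  show ?thesis
    by (rule that[of "max B 0"]) (use B in force)+
qed

lemma Ienn_eq:
  assumes "\<omega> \<in> space M"
  shows "Ienn \<omega> = ennreal (Ir \<omega>)" "Ir \<omega> \<ge> 0"
proof -
  obtain S where S: "S \<ge> 0" "\<And>u. u \<in> {0..T} \<Longrightarrow> \<bar>W u \<omega>\<bar> \<le> S" using path_bdd[OF assms] by blast
  have "Ienn \<omega> \<le> (\<integral>\<^sup>+ u. ennreal S * indicator {0..T} u \<partial>lborel)"
    unfolding Ienn_def using S by (intro nn_integral_mono) (auto simp: indicator_def)
  also have "\<dots> = ennreal S * ennreal T" using Tpos by (subst nn_integral_cmult_indicator) auto
  also have "\<dots> < top" by (simp add: ennreal_mult_less_top)
  finally show "Ienn \<omega> = ennreal (Ir \<omega>)" by (simp add: Ir_def)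
  show "Ir \<omega> \<ge> 0" by (simp add: Ir_def)
qed

lemma Wmax_pow_meas:
  assumes om: "\<omega> \<in> space M"
  shows "(\<lambda>u. indicator {0..T} u * ennreal (\<bar>W (max 0 u) \<omega>\<bar> ^ k)) \<in> borel_measurable borel"
proof -
  note [measurable] = Wmax_borel[OF om]
  show ?thesis by measurable
qed

lemma Wmax_abs_meas:
  assumes om: "\<omega> \<in> space M"
  shows "(\<lambda>u. indicator {0..T} u * ennreal \<bar>W (max 0 u) \<omega>\<bar>) \<in> borel_measurable borel"
  using Wmax_pow_meas[OF om, of 1] by simp

lemma exp_le: "0 \<le> v \<Longrightarrow> v \<le> T \<Longrightarrow> exp (b * v) \<le> exp (\<bar>b\<bar> * T)"
proof -
  assume v: "0 \<le> v" "v \<le> T"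
  have "b * v \<le> \<bar>b\<bar> * v" using v by (intro mult_right_mono) auto
  also have "\<dots> \<le> \<bar>b\<bar> * T" using v by (intro mult_left_mono) auto
  finally show ?thesis by simp
qed

lemma wdet_bound:
  assumes "0 \<le> s" "s \<le> T"
  shows "\<bar>wdet a b s\<bar> \<le> \<bar>a\<bar> * (T * exp (\<bar>b\<bar> * T))"
proof -
  have "\<bar>LBINT u=0..s. exp (b * (s - u))\<bar> \<le> s * exp (\<bar>b\<bar> * T)"
  proof (rule LBINT_bound)
    fix u assume u: "0 < u" "u < s"
    show "\<bar>exp (b * (s - u))\<bar> \<le> exp (\<bar>b\<bar> * T)"
      using exp_le[of "s - u"] u assms by simp
  qed (use assms in auto)
  also have "\<dots> \<le> T * exp (\<bar>b\<bar> * T)" using assms by (intro mult_right_mono) auto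
  finally show ?thesis unfolding wdet_def abs_mult by (intro mult_left_mono) auto
qed

lemma Wtil_bound:
  assumes om: "\<omega> \<in> space M" and s: "0 \<le> s" "s \<le> T"
  shows "\<bar>Wtil c b W s \<omega>\<bar> \<le> \<bar>c\<bar> * \<bar>W s \<omega>\<bar> + \<bar>c\<bar> * \<bar>b\<bar> * exp (\<bar>b\<bar> * T) * Ir \<omega>"
proof -
  define E where "E = exp (\<bar>b\<bar> * T)"
  have "ennreal \<bar>LBINT u=0..s. exp (b * (s - u)) * W u \<omega>\<bar>
      \<le> (\<integral>\<^sup>+ u. indicator {0<..<s} u * ennreal \<bar>exp (b * (s - u)) * W u \<omega>\<bar> \<partial>lborel)"
    by (rule LBINT_ennreal_bound[OF s(1)])
  also have "\<dots> \<le> (\<integral>\<^sup>+ u. ennreal E * (indicator {0..T} u * ennreal \<bar>W (max 0 u) \<omega>\<bar>) \<partial>lborel)"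
  proof (intro nn_integral_mono)
    fix u :: real
    show "indicator {0<..<s} u * ennreal \<bar>exp (b * (s - u)) * W u \<omega>\<bar>
          \<le> ennreal E * (indicator {0..T} u * ennreal \<bar>W (max 0 u) \<omega>\<bar>)"
    proof (cases "u \<in> {0<..<s}")
      case True
      then have u: "0 < u" "u < s" by auto
      have mx: "max 0 u = u" using u by simp
      have "exp (b * (s - u)) \<le> E" using exp_le[of "s - u"] u s by (simp add: E_def)
      then have "\<bar>exp (b * (s - u)) * W u \<omega>\<bar> \<le> E * \<bar>W (max 0 u) \<omega>\<bar>"
        unfolding abs_mult mx by (intro mult_right_mono) auto
      then show ?thesis using True s
        by (auto simp: indicator_def ennreal_mult'[symmetric] E_def intro!: ennreal_leI)
    qed simp
  qed
  also have "\<dots> = ennreal E * Ienn \<omega>" unfolding Ienn_def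
    by (rule nn_integral_cmult) (use Wmax_abs_meas[OF om] in simp)
  also have "\<dots> = ennreal (E * Ir \<omega>)" using Ienn_eq[OF om] by (simp add: E_def ennreal_mult')
  finally have I: "\<bar>LBINT u=0..s. exp (b * (s - u)) * W u \<omega>\<bar> \<le> E * Ir \<omega>"
    using Ienn_eq[OF om] by (simp add: E_def ennreal_le_iff)
  have "\<bar>Wtil c b W s \<omega>\<bar> = \<bar>c\<bar> * \<bar>W s \<omega> + b * (LBINT u=0..s. exp (b * (s - u)) * W u \<omega>)\<bar>"
    by (simp add: Wtil_def abs_mult)
  also have "\<dots> \<le> \<bar>c\<bar> * (\<bar>W s \<omega>\<bar> + \<bar>b\<bar> * (E * Ir \<omega>))"
    using I by (intro mult_left_mono) (auto simp: abs_mult intro!: order_trans[OF abs_triangle_ineq] mult_left_mono)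
  finally show ?thesis by (simp add: E_def algebra_simps)
qed

end




context bmT
begin

lemma J_bound:
  assumes om: "\<omega> \<in> space M"
  shows "ennreal (T * Ir \<omega> ^ k) \<le> ennreal (T ^ k) * J k \<omega>"
proof -
  define m where "m = Ir \<omega> / T"
  have Ir: "Ir \<omega> = m * T" using Tpos by (simp add: m_def)
  have m0: "m \<ge> 0" using Ienn_eq(2)[OF om] Tpos by (simp add: m_def)
  define h where "h u = \<bar>W (max 0 u) \<omega>\<bar>" for u
  have h0: "h u \<ge> 0" for u by (simp add: h_def)
  have hm: "(\<lambda>u. indicator {0..T} u * ennreal (h u)) \<in> borel_measurable borel"
    using Wmax_abs_meas[OF om] by (simp add: h_def)
  have hkm: "(\<lambda>u. indicator {0..T} u * ennreal (h u ^ k)) \<in> borel_measurable borel"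
    using Wmax_pow_meas[OF om] by (simp add: h_def)
  define A where "A = real k * m ^ (k - 1)"
  define B where "B = real k * m ^ k * T"
  have A0: "A \<ge> 0" using m0 by (simp add: A_def)
  have B0: "B \<ge> 0" using m0 Tpos by (simp add: B_def)
  have pt: "ennreal (m ^ k) * indicator {0..T} u + ennreal A * (indicator {0..T} u * ennreal (h u))
      \<le> indicator {0..T} u * ennreal (h u ^ k) + ennreal (B / T) * indicator {0..T} u" for u
  proof (cases "u \<in> {0..T}")
    case True
    have "m ^ k + A * h u \<le> h u ^ k + B / T"
      using tangent_pow[of "h u" m k] m0 h0 Tpos by (simp add: A_def B_def)
    then have "ennreal (m ^ k + A * h u) \<le> ennreal (h u ^ k + B / T)" by (rule ennreal_leI)
    moreover have "ennreal (m ^ k + A * h u) = ennreal (m ^ k) + ennreal A * ennreal (h u)"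
      using m0 A0 h0 by (simp add: ennreal_mult)
    moreover have "ennreal (h u ^ k + B / T) = ennreal (h u ^ k) + ennreal (B / T)"
      using h0 B0 Tpos by simp
    ultimately show ?thesis using True by simp
  qed simp
  have L: "(\<integral>\<^sup>+u. ennreal (m ^ k) * indicator {0..T} u + ennreal A * (indicator {0..T} u * ennreal (h u)) \<partial>lborel)
      = ennreal (m ^ k) * ennreal T + ennreal A * Ienn \<omega>"
    using hm Tpos
    by (simp add: nn_integral_add nn_integral_cmult nn_integral_cmult_indicator Ienn_def h_def)
  have R: "(\<integral>\<^sup>+u. indicator {0..T} u * ennreal (h u ^ k) + ennreal (B / T) * indicator {0..T} u \<partial>lborel)
      = J k \<omega> + ennreal (B / T) * ennreal T"
    using hkm Tpos
    by (simp add: nn_integral_add nn_integral_cmult nn_integral_cmult_indicator J_def h_def)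
  have "ennreal (m ^ k) * ennreal T + ennreal A * Ienn \<omega> \<le> J k \<omega> + ennreal (B / T) * ennreal T"
  proof -
    have "(\<integral>\<^sup>+u. ennreal (m ^ k) * indicator {0..T} u + ennreal A * (indicator {0..T} u * ennreal (h u)) \<partial>lborel)
       \<le> (\<integral>\<^sup>+u. indicator {0..T} u * ennreal (h u ^ k) + ennreal (B / T) * indicator {0..T} u \<partial>lborel)"
      by (intro nn_integral_mono pt)
    then show ?thesis unfolding L R .
  qed
  moreover have "ennreal A * Ienn \<omega> = ennreal B"
  proof -
    have "ennreal A * Ienn \<omega> = ennreal A * ennreal (Ir \<omega>)" using Ienn_eq[OF om] by simp
    also have "\<dots> = ennreal (A * Ir \<omega>)" by (rule ennreal_mult[symmetric]) (use A0 Ienn_eq(2)[OF om] in auto)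
    also have "A * Ir \<omega> = B" unfolding A_def B_def Ir by (cases k) (simp_all add: algebra_simps)
    finally show ?thesis .
  qed
  moreover have "ennreal (B / T) * ennreal T = ennreal B"
  proof -
    have "ennreal (B / T) * ennreal T = ennreal (B / T * T)" by (rule ennreal_mult[symmetric]) (use B0 Tpos in auto)
    also have "B / T * T = B" using Tpos by simp
    finally show ?thesis .
  qed
  ultimately have "ennreal B + ennreal (m ^ k) * ennreal T \<le> ennreal B + J k \<omega>"
    by (simp add: add.commute)
  then have Am: "ennreal (m ^ k) * ennreal T \<le> J k \<omega>" by (simp add: ennreal_add_left_cancel_le)
  have "ennreal (T * Ir \<omega> ^ k) = ennreal (T ^ k * (m ^ k * T))"
    by (simp add: Ir power_mult_distrib algebra_simps)
  also have "\<dots> = ennreal (T ^ k) * (ennreal (m ^ k) * ennreal T)"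
    using Tpos m0 by (simp add: ennreal_mult)
  also have "\<dots> \<le> ennreal (T ^ k) * J k \<omega>" by (intro mult_left_mono Am) simp
  finally show ?thesis .
qed

lemma Wtil_bdd:
  assumes om: "\<omega> \<in> space M"
  shows "bdd_above ((\<lambda>s. \<bar>Wtil c b W s \<omega>\<bar>) ` {0..T})"
proof -
  obtain S where S: "S \<ge> 0" "\<And>u. u \<in> {0..T} \<Longrightarrow> \<bar>W u \<omega>\<bar> \<le> S" using path_bdd[OF om] by blast
  show ?thesis
  proof (rule bdd_aboveI2)
    fix s assume s: "s \<in> {0..T}"
    have "\<bar>Wtil c b W s \<omega>\<bar> \<le> \<bar>c\<bar> * \<bar>W s \<omega>\<bar> + \<bar>c\<bar> * \<bar>b\<bar> * exp (\<bar>b\<bar> * T) * Ir \<omega>"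
      using Wtil_bound[OF om] s by auto
    also have "\<dots> \<le> \<bar>c\<bar> * S + \<bar>c\<bar> * \<bar>b\<bar> * exp (\<bar>b\<bar> * T) * Ir \<omega>"
      using S s by (intro add_right_mono mult_left_mono) auto
    finally show "\<bar>Wtil c b W s \<omega>\<bar> \<le> \<bar>c\<bar> * S + \<bar>c\<bar> * \<bar>b\<bar> * exp (\<bar>b\<bar> * T) * Ir \<omega>" .
  qed
qed

lemma Wtil_le_star:
  assumes om: "\<omega> \<in> space M" and s: "0 \<le> s" "s \<le> T"
  shows "\<bar>Wtil c b W s \<omega>\<bar> \<le> Wtil_star c b W T \<omega>"
  unfolding Wtil_star_def using s by (intro cSUP_upper Wtil_bdd[OF om]) auto

lemma Wstar_nonneg:
  assumes om: "\<omega> \<in> space M"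
  shows "0 \<le> Wtil_star c b W T \<omega>"
  using Wtil_le_star[OF om, of 0] Tpos by (meson abs_ge_zero order_trans order_refl less_imp_le)

end




lemma dfact_nonneg[simp]: "0 \<le> dfact n"
  using dfact_pos[of n] by simp

lemma ps_abs_meas[measurable]: "ps_abs q \<in> borel_measurable borel"
  unfolding ps_abs_def[abs_def] by measurable

lemma ps_abs_ennreal:
  assumes "negligible_df q" "y \<ge> 0"
  shows "ennreal (ps_abs q y) = (\<Sum>k. ennreal (\<bar>q k\<bar> * y ^ k))"
  unfolding ps_abs_def using assms neg_summable_abs[OF assms]
  by (intro suminf_ennreal2[symmetric]) auto

locale bmq = bmT +
  fixes q :: "nat \<Rightarrow> real" and a b c :: real
  assumes negq: "negligible_df q"
begin

definition "Eb = exp (\<bar>b\<bar> * T)"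
definition "K = \<bar>a\<bar> * (T * Eb)"
definition "gm = \<bar>c\<bar> * \<bar>b\<bar> * Eb"
definition "H \<omega> = (\<Sum>k. ennreal (\<bar>q k\<bar> * (4 * gm) ^ k * T ^ k / T) * J k \<omega>)"
definition "ZH = (\<Sum>k. \<bar>q k\<bar> * (4 * gm * T * sqrt T) ^ k * dfact (k - 1))"
definition "ZP = (\<Sum>k. \<bar>q k\<bar> * (4 * \<bar>c\<bar> * sqrt T) ^ k * dfact (k - 1))"
definition "A0 x = ps_abs q (4 * Eb * \<bar>x\<bar>) + ps_abs q (4 * K)"
definition "G x s \<omega> = ennreal (A0 x) + ennreal (ps_abs q (4 * \<bar>c\<bar> * \<bar>W (max 0 s) \<omega>\<bar>)) + H \<omega>"

lemma Eb_ge1: "Eb \<ge> 1" using Tpos by (simp add: Eb_def)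
lemma K0: "K \<ge> 0" using Tpos by (simp add: K_def Eb_def)
lemma gm0: "gm \<ge> 0" by (simp add: gm_def Eb_def)

lemma ZH_sums: "summable (\<lambda>k. \<bar>q k\<bar> * (4 * gm * T * sqrt T) ^ k * dfact (k - 1))"
  using gm0 Tpos by (intro neg_summable[OF negq]) auto
lemma ZP_sums: "summable (\<lambda>k. \<bar>q k\<bar> * (4 * \<bar>c\<bar> * sqrt T) ^ k * dfact (k - 1))"
  using Tpos by (intro neg_summable[OF negq]) auto

lemma ZH0: "ZH \<ge> 0" unfolding ZH_def using ZH_sums gm0 Tpos
  by (intro suminf_nonneg) (auto intro!: mult_nonneg_nonneg)
lemma ZP0: "ZP \<ge> 0" unfolding ZP_def using ZP_sums Tpos
  by (intro suminf_nonneg) (auto intro!: mult_nonneg_nonneg)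
lemma A00: "A0 x \<ge> 0" unfolding A0_def using K0 Eb_ge1
  by (intro add_nonneg_nonneg ps_abs_nonneg[OF negq]) auto

lemma y_bound:
  assumes om: "\<omega> \<in> space M" and s: "0 \<le> s" "s \<le> T"
  shows "\<bar>exp (b * s) * x + wdet a b s + Wtil c b W s \<omega>\<bar> \<le> Eb * \<bar>x\<bar> + K + \<bar>c\<bar> * \<bar>W s \<omega>\<bar> + gm * Ir \<omega>"
proof -
  have "\<bar>exp (b * s) * x\<bar> \<le> Eb * \<bar>x\<bar>" unfolding abs_mult Eb_def
    using exp_le[OF s] by (intro mult_right_mono) auto
  moreover have "\<bar>wdet a b s\<bar> \<le> K" unfolding K_def Eb_def by (rule wdet_bound[OF s])
  moreover have "\<bar>Wtil c b W s \<omega>\<bar> \<le> \<bar>c\<bar> * \<bar>W s \<omega>\<bar> + gm * Ir \<omega>"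
    using Wtil_bound[OF om s] by (simp add: gm_def Eb_def)
  ultimately show ?thesis by linarith
qed

lemma q_path:
  assumes om: "\<omega> \<in> space M" and s: "0 \<le> s" "s \<le> T"
  shows "\<bar>ps_eval q (exp (b * s) * x + wdet a b s + Wtil c b W s \<omega>)\<bar>
    \<le> A0 x + ps_abs q (4 * (\<bar>c\<bar> * \<bar>W s \<omega>\<bar>)) + ps_abs q (4 * (gm * Ir \<omega>))"
proof -
  have "\<bar>ps_eval q (exp (b * s) * x + wdet a b s + Wtil c b W s \<omega>)\<bar>
    \<le> ps_abs q (4 * (Eb * \<bar>x\<bar>)) + ps_abs q (4 * K) + ps_abs q (4 * (\<bar>c\<bar> * \<bar>W s \<omega>\<bar>)) + ps_abs q (4 * (gm * Ir \<omega>))"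
    using y_bound[OF om s, of x] Eb_ge1 K0 gm0 Ienn_eq(2)[OF om]
    by (intro ps_split4[OF negq]) auto
  then show ?thesis by (simp add: A0_def mult.assoc)
qed

lemma H_ge:
  assumes om: "\<omega> \<in> space M"
  shows "ennreal (ps_abs q (4 * (gm * Ir \<omega>))) \<le> H \<omega>"
proof -
  have I0: "Ir \<omega> \<ge> 0" using Ienn_eq(2)[OF om] .
  have "ennreal (ps_abs q (4 * (gm * Ir \<omega>))) = (\<Sum>k. ennreal (\<bar>q k\<bar> * (4 * (gm * Ir \<omega>)) ^ k))"
    using I0 gm0 by (intro ps_abs_ennreal[OF negq]) auto
  also have "\<dots> \<le> H \<omega>" unfolding H_def
  proof (intro suminf_le summableI)
    fix k
    have "ennreal (\<bar>q k\<bar> * (4 * (gm * Ir \<omega>)) ^ k) = ennreal (\<bar>q k\<bar> * (4 * gm) ^ k / T) * ennreal (T * Ir \<omega> ^ k)"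
    proof -
      have "\<bar>q k\<bar> * (4 * (gm * Ir \<omega>)) ^ k = (\<bar>q k\<bar> * (4 * gm) ^ k / T) * (T * Ir \<omega> ^ k)"
        using Tpos by (simp add: power_mult_distrib field_simps)
      then show ?thesis by (simp only:) (rule ennreal_mult; use Tpos gm0 I0 in auto)
    qed
    also have "\<dots> \<le> ennreal (\<bar>q k\<bar> * (4 * gm) ^ k / T) * (ennreal (T ^ k) * J k \<omega>)"
      by (intro mult_left_mono J_bound[OF om]) simp
    also have "\<dots> = ennreal (\<bar>q k\<bar> * (4 * gm) ^ k * T ^ k / T) * J k \<omega>"
    proof -
      have "ennreal (\<bar>q k\<bar> * (4 * gm) ^ k / T) * ennreal (T ^ k) = ennreal (\<bar>q k\<bar> * (4 * gm) ^ k * T ^ k / T)"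
        using Tpos gm0 by (subst ennreal_mult[symmetric]) (auto simp: field_simps)
      then show ?thesis by (simp add: mult.assoc[symmetric])
    qed
    finally show "ennreal (\<bar>q k\<bar> * (4 * (gm * Ir \<omega>)) ^ k) \<le> ennreal (\<bar>q k\<bar> * (4 * gm) ^ k * T ^ k / T) * J k \<omega>" .
  qed
  finally show ?thesis .
qed

lemma G_ge:
  assumes om: "\<omega> \<in> space M" and s: "0 \<le> s" "s \<le> T"
  shows "ennreal \<bar>ps_eval q (exp (b * s) * x + wdet a b s + Wtil c b W s \<omega>)\<bar> \<le> G x s \<omega>"
proof -
  have P0: "ps_abs q (4 * (\<bar>c\<bar> * \<bar>W s \<omega>\<bar>)) \<ge> 0" by (intro ps_abs_nonneg[OF negq]) auto
  have Q0: "ps_abs q (4 * (gm * Ir \<omega>)) \<ge> 0" using gm0 Ienn_eq(2)[OF om] by (intro ps_abs_nonneg[OF negq]) auto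
  have "ennreal \<bar>ps_eval q (exp (b * s) * x + wdet a b s + Wtil c b W s \<omega>)\<bar>
      \<le> ennreal (A0 x + ps_abs q (4 * (\<bar>c\<bar> * \<bar>W s \<omega>\<bar>)) + ps_abs q (4 * (gm * Ir \<omega>)))"
    by (intro ennreal_leI q_path[OF om s])
  also have "\<dots> = ennreal (A0 x) + ennreal (ps_abs q (4 * (\<bar>c\<bar> * \<bar>W s \<omega>\<bar>))) + ennreal (ps_abs q (4 * (gm * Ir \<omega>)))"
    using A00 P0 Q0 by simp
  also have "\<dots> \<le> ennreal (A0 x) + ennreal (ps_abs q (4 * (\<bar>c\<bar> * \<bar>W s \<omega>\<bar>))) + H \<omega>"
    by (intro add_left_mono H_ge[OF om])
  also have "\<dots> = G x s \<omega>" using s by (simp add: G_def mult.assoc)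
  finally show ?thesis .
qed

lemma joint_swap: "(\<lambda>p. W (max 0 (snd p)) (fst p)) \<in> borel_measurable (M \<Otimes>\<^sub>M lborel)"
proof -
  have "(\<lambda>p. W (max 0 (fst p)) (snd p)) \<circ> (\<lambda>(x, y). (y, x)) \<in> borel_measurable (M \<Otimes>\<^sub>M lborel)"
    by (rule measurable_comp[OF measurable_pair_swap' joint_meas])
  then show ?thesis by (simp add: o_def case_prod_beta)
qed

lemma J_meas[measurable]: "J k \<in> borel_measurable M"
proof -
  note [measurable] = joint_swap
  have "(\<lambda>p. indicator {0..T} (snd p) * ennreal (\<bar>W (max 0 (snd p)) (fst p)\<bar> ^ k)) \<in> borel_measurable (M \<Otimes>\<^sub>M lborel)"
    by measurable
  then have "(\<lambda>\<omega>. \<integral>\<^sup>+ u. indicator {0..T} u * ennreal (\<bar>W (max 0 u) \<omega>\<bar> ^ k) \<partial>lborel) \<in> borel_measurable M"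
    by (intro lborel.borel_measurable_nn_integral) (simp add: case_prod_beta)
  then show ?thesis by (simp add: J_def[abs_def])
qed

lemma H_meas[measurable]: "H \<in> borel_measurable M"
  unfolding H_def[abs_def] by measurable

lemma G_meas: "(\<lambda>p. G x (fst p) (snd p)) \<in> borel_measurable (lborel \<Otimes>\<^sub>M M)"
proof -
  note [measurable] = joint_meas
  have "(\<lambda>p. H (snd p)) \<in> borel_measurable (lborel \<Otimes>\<^sub>M M)"
    by (rule measurable_compose[OF measurable_snd H_meas])
  note [measurable] = this
  show ?thesis unfolding G_def by measurable
qed

lemma pair: "pair_sigma_finite lborel M"
  by (simp add: pair_sigma_finite_def lborel.sigma_finite_measure_axioms prob_space_imp_sigma_finite prob)

lemma EP:
  assumes s: "0 \<le> s" "s \<le> T"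
  shows "(\<integral>\<^sup>+\<omega>. ennreal (ps_abs q (4 * (\<bar>c\<bar> * \<bar>W s \<omega>\<bar>))) \<partial>M) \<le> ennreal ZP"
proof -
  have "(\<integral>\<^sup>+\<omega>. ennreal (ps_abs q (4 * (\<bar>c\<bar> * \<bar>W s \<omega>\<bar>))) \<partial>M)
      = (\<integral>\<^sup>+\<omega>. (\<Sum>k. ennreal (\<bar>q k\<bar> * (4 * \<bar>c\<bar>) ^ k) * ennreal (\<bar>W s \<omega>\<bar> ^ k)) \<partial>M)"
  proof (intro nn_integral_cong)
    fix \<omega>
    have "ennreal (ps_abs q (4 * (\<bar>c\<bar> * \<bar>W s \<omega>\<bar>))) = (\<Sum>k. ennreal (\<bar>q k\<bar> * (4 * (\<bar>c\<bar> * \<bar>W s \<omega>\<bar>)) ^ k))"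
      by (intro ps_abs_ennreal[OF negq]) auto
    also have "\<dots> = (\<Sum>k. ennreal (\<bar>q k\<bar> * (4 * \<bar>c\<bar>) ^ k) * ennreal (\<bar>W s \<omega>\<bar> ^ k))"
      by (intro suminf_cong) (simp add: ennreal_mult[symmetric] power_mult_distrib mult.assoc)
    finally show "ennreal (ps_abs q (4 * (\<bar>c\<bar> * \<bar>W s \<omega>\<bar>))) = (\<Sum>k. ennreal (\<bar>q k\<bar> * (4 * \<bar>c\<bar>) ^ k) * ennreal (\<bar>W s \<omega>\<bar> ^ k))" .
  qed
  also have "\<dots> = (\<Sum>k. ennreal (\<bar>q k\<bar> * (4 * \<bar>c\<bar>) ^ k) * (\<integral>\<^sup>+\<omega>. ennreal (\<bar>W s \<omega>\<bar> ^ k) \<partial>M))"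
    by (subst nn_integral_suminf) (auto intro!: suminf_cong nn_integral_cmult)
  also have "\<dots> \<le> (\<Sum>k. ennreal (\<bar>q k\<bar> * (4 * \<bar>c\<bar> * sqrt T) ^ k * dfact (k - 1)))"
  proof (intro suminf_le summableI)
    fix k
    have "ennreal (\<bar>q k\<bar> * (4 * \<bar>c\<bar>) ^ k) * (\<integral>\<^sup>+\<omega>. ennreal (\<bar>W s \<omega>\<bar> ^ k) \<partial>M)
        \<le> ennreal (\<bar>q k\<bar> * (4 * \<bar>c\<bar>) ^ k) * ennreal (sqrt s ^ k * dfact (k - 1))"
      by (intro mult_left_mono moment s) simp
    also have "\<dots> \<le> ennreal (\<bar>q k\<bar> * (4 * \<bar>c\<bar>) ^ k) * ennreal (sqrt T ^ k * dfact (k - 1))"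
      using s dfact_pos[of "k-1"] by (intro mult_left_mono ennreal_leI mult_right_mono power_mono) auto
    also have "\<dots> = ennreal (\<bar>q k\<bar> * (4 * \<bar>c\<bar> * sqrt T) ^ k * dfact (k - 1))"
      using Tpos by (subst ennreal_mult[symmetric]) (auto simp: power_mult_distrib mult_ac)
    finally show "ennreal (\<bar>q k\<bar> * (4 * \<bar>c\<bar>) ^ k) * (\<integral>\<^sup>+\<omega>. ennreal (\<bar>W s \<omega>\<bar> ^ k) \<partial>M)
        \<le> ennreal (\<bar>q k\<bar> * (4 * \<bar>c\<bar> * sqrt T) ^ k * dfact (k - 1))" .
  qed
  also have "\<dots> = ennreal ZP" unfolding ZP_def
    using ZP_sums Tpos by (intro suminf_ennreal2) (auto intro!: mult_nonneg_nonneg)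
  finally show ?thesis .
qed

end




context bmq
begin

lemma EJ: "(\<integral>\<^sup>+\<omega>. J k \<omega> \<partial>M) \<le> ennreal (T * (sqrt T ^ k * dfact (k - 1)))"
proof -
  interpret P: pair_sigma_finite lborel M by (rule pair)
  note [measurable] = joint_meas
  have meas: "(\<lambda>p. indicator {0..T} (fst p) * ennreal (\<bar>W (max 0 (fst p)) (snd p)\<bar> ^ k)) \<in> borel_measurable (lborel \<Otimes>\<^sub>M M)"
    by measurable
  have "(\<integral>\<^sup>+\<omega>. J k \<omega> \<partial>M) = (\<integral>\<^sup>+\<omega>. (\<integral>\<^sup>+ u. indicator {0..T} u * ennreal (\<bar>W (max 0 u) \<omega>\<bar> ^ k) \<partial>lborel) \<partial>M)"
    by (simp add: J_def)
  also have "\<dots> = (\<integral>\<^sup>+ u. (\<integral>\<^sup>+\<omega>. indicator {0..T} u * ennreal (\<bar>W (max 0 u) \<omega>\<bar> ^ k) \<partial>M) \<partial>lborel)"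
    by (rule P.Fubini') (use meas in \<open>simp add: case_prod_beta\<close>)
  also have "\<dots> = (\<integral>\<^sup>+ u. indicator {0..T} u * (\<integral>\<^sup>+\<omega>. ennreal (\<bar>W (max 0 u) \<omega>\<bar> ^ k) \<partial>M) \<partial>lborel)"
    by (intro nn_integral_cong nn_integral_cmult) simp
  also have "\<dots> \<le> (\<integral>\<^sup>+ u. ennreal (sqrt T ^ k * dfact (k - 1)) * indicator {0..T} u \<partial>lborel)"
  proof (intro nn_integral_mono)
    fix u :: real
    show "indicator {0..T} u * (\<integral>\<^sup>+\<omega>. ennreal (\<bar>W (max 0 u) \<omega>\<bar> ^ k) \<partial>M)
        \<le> ennreal (sqrt T ^ k * dfact (k - 1)) * indicator {0..T} u"
    proof (cases "u \<in> {0..T}")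
      case True
      then have mx: "max 0 u = u" by simp
      have "(\<integral>\<^sup>+\<omega>. ennreal (\<bar>W u \<omega>\<bar> ^ k) \<partial>M) \<le> ennreal (sqrt u ^ k * dfact (k - 1))"
        using True by (intro moment) simp
      also have "\<dots> \<le> ennreal (sqrt T ^ k * dfact (k - 1))"
        using True by (intro ennreal_leI mult_right_mono power_mono) auto
      finally show ?thesis using True mx by simp
    qed simp
  qed
  also have "\<dots> = ennreal (sqrt T ^ k * dfact (k - 1)) * ennreal T"
    using Tpos by (subst nn_integral_cmult_indicator) auto
  also have "\<dots> = ennreal (T * (sqrt T ^ k * dfact (k - 1)))"
    using Tpos by (subst ennreal_mult[symmetric]) (auto simp: mult.commute)
  finally show ?thesis .
qed

lemma EH: "(\<integral>\<^sup>+\<omega>. H \<omega> \<partial>M) \<le> ennreal ZH"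
proof -
  have "(\<integral>\<^sup>+\<omega>. H \<omega> \<partial>M) = (\<Sum>k. ennreal (\<bar>q k\<bar> * (4 * gm) ^ k * T ^ k / T) * (\<integral>\<^sup>+\<omega>. J k \<omega> \<partial>M))"
    unfolding H_def by (subst nn_integral_suminf) (auto intro!: suminf_cong nn_integral_cmult)
  also have "\<dots> \<le> (\<Sum>k. ennreal (\<bar>q k\<bar> * (4 * gm * T * sqrt T) ^ k * dfact (k - 1)))"
  proof (intro suminf_le summableI)
    fix k
    have "ennreal (\<bar>q k\<bar> * (4 * gm) ^ k * T ^ k / T) * (\<integral>\<^sup>+\<omega>. J k \<omega> \<partial>M)
       \<le> ennreal (\<bar>q k\<bar> * (4 * gm) ^ k * T ^ k / T) * ennreal (T * (sqrt T ^ k * dfact (k - 1)))"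
      by (intro mult_left_mono EJ) simp
    also have "\<dots> = ennreal ((\<bar>q k\<bar> * (4 * gm) ^ k * T ^ k / T) * (T * (sqrt T ^ k * dfact (k - 1))))"
      using Tpos gm0 by (intro ennreal_mult[symmetric]) auto
    also have "(\<bar>q k\<bar> * (4 * gm) ^ k * T ^ k / T) * (T * (sqrt T ^ k * dfact (k - 1)))
        = \<bar>q k\<bar> * (4 * gm * T * sqrt T) ^ k * dfact (k - 1)"
      using Tpos by (simp add: power_mult_distrib field_simps)
    finally show "ennreal (\<bar>q k\<bar> * (4 * gm) ^ k * T ^ k / T) * (\<integral>\<^sup>+\<omega>. J k \<omega> \<partial>M)
       \<le> ennreal (\<bar>q k\<bar> * (4 * gm * T * sqrt T) ^ k * dfact (k - 1))" .
  qed
  also have "\<dots> = ennreal ZH" unfolding ZH_def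
    using ZH_sums Tpos gm0 by (intro suminf_ennreal2) (auto intro!: mult_nonneg_nonneg)
  finally show ?thesis .
qed

lemma G_meas_om: "G x s \<in> borel_measurable M"
  unfolding G_def[abs_def] by measurable

lemma EG:
  assumes s: "0 \<le> s" "s \<le> T"
  shows "(\<integral>\<^sup>+\<omega>. G x s \<omega> \<partial>M) \<le> ennreal (A0 x + ZP + ZH)"
proof -
  interpret prob_space M by (rule prob)
  have "(\<integral>\<^sup>+\<omega>. G x s \<omega> \<partial>M) = (\<integral>\<^sup>+\<omega>. ennreal (A0 x) + ennreal (ps_abs q (4 * (\<bar>c\<bar> * \<bar>W s \<omega>\<bar>))) + H \<omega> \<partial>M)"
    using s by (simp add: G_def mult.assoc)
  also have "\<dots> = ennreal (A0 x) + (\<integral>\<^sup>+\<omega>. ennreal (ps_abs q (4 * (\<bar>c\<bar> * \<bar>W s \<omega>\<bar>))) \<partial>M) + (\<integral>\<^sup>+\<omega>. H \<omega> \<partial>M)"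
    by (simp add: nn_integral_add emeasure_space_1)
  also have "\<dots> \<le> ennreal (A0 x) + ennreal ZP + ennreal ZH"
    by (intro add_mono EP[OF s] EH order_refl)
  also have "\<dots> = ennreal (A0 x + ZP + ZH)" using A00 ZP0 ZH0 by simp
  finally show ?thesis .
qed

lemma EXP:
  assumes t: "0 \<le> t" "t \<le> T"
  shows "(\<integral>\<^sup>+ \<omega>. ennreal \<bar>LBINT s=0..t. ps_eval q (exp (b * s) * x + wdet a b s + Wtil c b W s \<omega>)\<bar> \<partial>M)
       + (\<integral>\<^sup>+ \<omega>. ennreal \<bar>ps_eval q (exp (b * t) * x + wdet a b t + Wtil c b W t \<omega>)\<bar> \<partial>M)
       \<le> ennreal ((1 + T) * (A0 x + ZP + ZH))"
proof -
  interpret P: pair_sigma_finite lborel M by (rule pair)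
  define Z where "Z = A0 x + ZP + ZH"
  have Z0: "Z \<ge> 0" using A00 ZP0 ZH0 by (simp add: Z_def)
  have GM: "(\<lambda>p. indicator {0..T} (fst p) * G x (fst p) (snd p)) \<in> borel_measurable (lborel \<Otimes>\<^sub>M M)"
    using G_meas[of x] by measurable
  have "(\<integral>\<^sup>+ \<omega>. ennreal \<bar>LBINT s=0..t. ps_eval q (exp (b * s) * x + wdet a b s + Wtil c b W s \<omega>)\<bar> \<partial>M)
     \<le> (\<integral>\<^sup>+ \<omega>. (\<integral>\<^sup>+ s. indicator {0..T} s * G x s \<omega> \<partial>lborel) \<partial>M)"
  proof (intro nn_integral_mono)
    fix \<omega> assume om: "\<omega> \<in> space M"
    have "ennreal \<bar>LBINT s=0..t. ps_eval q (exp (b * s) * x + wdet a b s + Wtil c b W s \<omega>)\<bar>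
       \<le> (\<integral>\<^sup>+ s. indicator {0<..<t} s * ennreal \<bar>ps_eval q (exp (b * s) * x + wdet a b s + Wtil c b W s \<omega>)\<bar> \<partial>lborel)"
      by (rule LBINT_ennreal_bound[OF t(1)])
    also have "\<dots> \<le> (\<integral>\<^sup>+ s. indicator {0..T} s * G x s \<omega> \<partial>lborel)"
    proof (intro nn_integral_mono)
      fix s :: real
      show "indicator {0<..<t} s * ennreal \<bar>ps_eval q (exp (b * s) * x + wdet a b s + Wtil c b W s \<omega>)\<bar>
          \<le> indicator {0..T} s * G x s \<omega>"
      proof (cases "s \<in> {0<..<t}")
        case True
        then have "s \<in> {0..T}" using t by auto
        then show ?thesis using True G_ge[OF om, of s x] by simp
      qed simp
    qed
    finally show "ennreal \<bar>LBINT s=0..t. ps_eval q (exp (b * s) * x + wdet a b s + Wtil c b W s \<omega>)\<bar>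
       \<le> (\<integral>\<^sup>+ s. indicator {0..T} s * G x s \<omega> \<partial>lborel)" .
  qed
  also have "\<dots> = (\<integral>\<^sup>+ s. (\<integral>\<^sup>+ \<omega>. indicator {0..T} s * G x s \<omega> \<partial>M) \<partial>lborel)"
    by (rule P.Fubini') (use GM in \<open>simp add: case_prod_beta\<close>)
  also have "\<dots> = (\<integral>\<^sup>+ s. indicator {0..T} s * (\<integral>\<^sup>+ \<omega>. G x s \<omega> \<partial>M) \<partial>lborel)"
    by (intro nn_integral_cong nn_integral_cmult G_meas_om)
  also have "\<dots> \<le> (\<integral>\<^sup>+ s. ennreal Z * indicator {0..T} s \<partial>lborel)"
  proof (intro nn_integral_mono)
    fix s :: real
    show "indicator {0..T} s * (\<integral>\<^sup>+ \<omega>. G x s \<omega> \<partial>M) \<le> ennreal Z * indicator {0..T} s"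
    proof (cases "s \<in> {0..T}")
      case True
      then show ?thesis using EG[of s x] by (simp add: Z_def)
    qed simp
  qed
  also have "\<dots> = ennreal Z * ennreal T"
    using Tpos by (subst nn_integral_cmult_indicator) auto
  finally have S1: "(\<integral>\<^sup>+ \<omega>. ennreal \<bar>LBINT s=0..t. ps_eval q (exp (b * s) * x + wdet a b s + Wtil c b W s \<omega>)\<bar> \<partial>M)
     \<le> ennreal Z * ennreal T" .
  have "(\<integral>\<^sup>+ \<omega>. ennreal \<bar>ps_eval q (exp (b * t) * x + wdet a b t + Wtil c b W t \<omega>)\<bar> \<partial>M)
     \<le> (\<integral>\<^sup>+ \<omega>. G x t \<omega> \<partial>M)"
    by (intro nn_integral_mono G_ge t)
  also have "\<dots> \<le> ennreal Z" unfolding Z_def by (rule EG[OF t])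
  finally have S2: "(\<integral>\<^sup>+ \<omega>. ennreal \<bar>ps_eval q (exp (b * t) * x + wdet a b t + Wtil c b W t \<omega>)\<bar> \<partial>M) \<le> ennreal Z" .
  have "ennreal Z * ennreal T + ennreal Z = ennreal ((1 + T) * Z)"
    using Z0 Tpos by (simp add: ennreal_mult[symmetric] algebra_simps)
  then show ?thesis using add_mono[OF S1 S2] by (simp add: Z_def)
qed

end




context bmq
begin

definition "C0 = ps_abs q (4 * K) + ps_abs q 0"
definition "rr k = (1 + T) * ((4 * Eb) ^ k * \<bar>q k\<bar> + (if k = 0 then C0 else 0))"
definition "Best x \<omega> = (ps_abs q (4 * Eb * \<bar>x\<bar>) + C0) + (ps_abs q (4 * Eb * Wtil_star c b W T \<omega>) + C0)"

lemma C00: "C0 \<ge> 0" unfolding C0_def using K0 by (intro add_nonneg_nonneg ps_abs_nonneg[OF negq]) auto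

lemma rr_neg: "negligible_df rr"
  unfolding rr_def[abs_def] using Tpos Eb_ge1 by (intro neg_r[OF negq]) auto

lemma rr_abs: "y \<ge> 0 \<Longrightarrow> ps_abs rr y = (1 + T) * (ps_abs q (4 * Eb * y) + C0)"
  unfolding rr_def[abs_def] using Tpos Eb_ge1 C00 by (intro ps_abs_r[OF negq]) auto

lemma Best_le:
  assumes om: "\<omega> \<in> space M"
  shows "0 \<le> Best x \<omega>" "(1 + T) * Best x \<omega> = ps_abs rr \<bar>x\<bar> + ps_abs rr (Wtil_star c b W T \<omega>)"
proof -
  have W0: "Wtil_star c b W T \<omega> \<ge> 0" by (rule Wstar_nonneg[OF om])
  show "0 \<le> Best x \<omega>" unfolding Best_def using C00 W0 Eb_ge1
    by (intro add_nonneg_nonneg ps_abs_nonneg[OF negq]) auto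
  show "(1 + T) * Best x \<omega> = ps_abs rr \<bar>x\<bar> + ps_abs rr (Wtil_star c b W T \<omega>)"
    using W0 by (simp add: rr_abs Best_def algebra_simps)
qed

lemma q_est:
  assumes om: "\<omega> \<in> space M" and s: "0 \<le> s" "s \<le> T"
  shows "\<bar>ps_eval q (exp (b * s) * x + wdet a b s + Wtil c b W s \<omega>)\<bar> \<le> Best x \<omega>"
proof -
  define Ws where "Ws = Wtil_star c b W T \<omega>"
  have W0: "Ws \<ge> 0" unfolding Ws_def by (rule Wstar_nonneg[OF om])
  have y: "\<bar>exp (b * s) * x + wdet a b s + Wtil c b W s \<omega>\<bar> \<le> Eb * \<bar>x\<bar> + K + Ws + 0"
  proof -
    have "\<bar>exp (b * s) * x\<bar> \<le> Eb * \<bar>x\<bar>" unfolding abs_mult Eb_def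
      using exp_le[OF s] by (intro mult_right_mono) auto
    moreover have "\<bar>wdet a b s\<bar> \<le> K" unfolding K_def Eb_def by (rule wdet_bound[OF s])
    moreover have "\<bar>Wtil c b W s \<omega>\<bar> \<le> Ws" unfolding Ws_def by (rule Wtil_le_star[OF om s])
    ultimately show ?thesis by linarith
  qed
  have "\<bar>ps_eval q (exp (b * s) * x + wdet a b s + Wtil c b W s \<omega>)\<bar>
      \<le> ps_abs q (4 * (Eb * \<bar>x\<bar>)) + ps_abs q (4 * K) + ps_abs q (4 * Ws) + ps_abs q (4 * 0)"
    using y Eb_ge1 K0 W0 by (intro ps_split4[OF negq]) auto
  also have "ps_abs q (4 * Ws) \<le> ps_abs q (4 * Eb * Ws)"
    using W0 Eb_ge1 mult_right_mono[of 1 Eb Ws] by (intro ps_abs_mono[OF negq]) auto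
  then have "ps_abs q (4 * (Eb * \<bar>x\<bar>)) + ps_abs q (4 * K) + ps_abs q (4 * Ws) + ps_abs q (4 * 0) \<le> Best x \<omega>"
    using C00 by (simp add: Best_def C0_def Ws_def mult.assoc)
  finally show ?thesis .
qed

end

theorem proposition6p7:
  fixes M :: "'a measure" and W :: "real \<Rightarrow> 'a \<Rightarrow> real"
    and a b c T :: real and q :: "nat \<Rightarrow> real"
  assumes "brownian_motion M W" and "c \<noteq> 0" and "T > 0"
    and "negligible_df q"
  shows "estimable M c b W T
           (\<lambda>t x \<omega>. LBINT s=0..t. ps_eval q (exp (b * s) * x + wdet a b s + Wtil c b W s \<omega>))
       \<and> estimable M c b W T
           (\<lambda>t x \<omega>. ps_eval q (exp (b * t) * x + wdet a b t + Wtil c b W t \<omega>))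
       \<and> (\<exists>qt (C::real). negligible_df qt \<and>
           (\<forall>t\<in>{0..T}. \<forall>x.
              (\<integral>\<^sup>+ \<omega>. ennreal \<bar>LBINT s=0..t. ps_eval q (exp (b * s) * x + wdet a b s + Wtil c b W s \<omega>)\<bar> \<partial>M)
            + (\<integral>\<^sup>+ \<omega>. ennreal \<bar>ps_eval q (exp (b * t) * x + wdet a b t + Wtil c b W t \<omega>)\<bar> \<partial>M)
            \<le> ennreal (ps_abs qt \<bar>x\<bar> + C)))"
proof -
  interpret bmq M W T q a b c
    using assms by (simp add: bmq_def bmT_def bmq_axioms_def)
  have E1: "estimable M c b W T
           (\<lambda>t x \<omega>. LBINT s=0..t. ps_eval q (exp (b * s) * x + wdet a b s + Wtil c b W s \<omega>))"
    unfolding estimable_def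
  proof (intro exI[of _ rr] conjI rr_neg ballI allI AE_I2)
    fix t x \<omega> assume t: "t \<in> {0..T}" and om: "\<omega> \<in> space M"
    have "\<bar>LBINT s=0..t. ps_eval q (exp (b * s) * x + wdet a b s + Wtil c b W s \<omega>)\<bar> \<le> t * Best x \<omega>"
      using t Best_le(1)[OF om] by (intro LBINT_bound q_est[OF om]) auto
    also have "\<dots> \<le> (1 + T) * Best x \<omega>"
      using t Best_le(1)[OF om] by (intro mult_right_mono) auto
    also have "\<dots> = ps_abs rr \<bar>x\<bar> + ps_abs rr (Wtil_star c b W T \<omega>)" by (rule Best_le(2)[OF om])
    finally show "\<bar>LBINT s=0..t. ps_eval q (exp (b * s) * x + wdet a b s + Wtil c b W s \<omega>)\<bar>
        \<le> ps_abs rr \<bar>x\<bar> + ps_abs rr (Wtil_star c b W T \<omega>)" .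
  qed
  have E2: "estimable M c b W T
           (\<lambda>t x \<omega>. ps_eval q (exp (b * t) * x + wdet a b t + Wtil c b W t \<omega>))"
    unfolding estimable_def
  proof (intro exI[of _ rr] conjI rr_neg ballI allI AE_I2)
    fix t x \<omega> assume t: "t \<in> {0..T}" and om: "\<omega> \<in> space M"
    have "\<bar>ps_eval q (exp (b * t) * x + wdet a b t + Wtil c b W t \<omega>)\<bar> \<le> Best x \<omega>"
      using t by (intro q_est[OF om]) auto
    also have "\<dots> \<le> (1 + T) * Best x \<omega>"
      using Tpos Best_le(1)[OF om] mult_right_mono[of 1 "1 + T" "Best x \<omega>"] by simp
    also have "\<dots> = ps_abs rr \<bar>x\<bar> + ps_abs rr (Wtil_star c b W T \<omega>)" by (rule Best_le(2)[OF om])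
    finally show "\<bar>ps_eval q (exp (b * t) * x + wdet a b t + Wtil c b W t \<omega>)\<bar>
        \<le> ps_abs rr \<bar>x\<bar> + ps_abs rr (Wtil_star c b W T \<omega>)" .
  qed
  have E3: "\<exists>qt (C::real). negligible_df qt \<and>
           (\<forall>t\<in>{0..T}. \<forall>x.
              (\<integral>\<^sup>+ \<omega>. ennreal \<bar>LBINT s=0..t. ps_eval q (exp (b * s) * x + wdet a b s + Wtil c b W s \<omega>)\<bar> \<partial>M)
            + (\<integral>\<^sup>+ \<omega>. ennreal \<bar>ps_eval q (exp (b * t) * x + wdet a b t + Wtil c b W t \<omega>)\<bar> \<partial>M)
            \<le> ennreal (ps_abs qt \<bar>x\<bar> + C))"
  proof (intro exI[of _ rr] exI[of _ "(1 + T) * (ps_abs q (4 * K) + ZP + ZH)"] conjI rr_neg ballI allI)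
    fix t x assume t: "t \<in> {0..T}"
    have "(\<integral>\<^sup>+ \<omega>. ennreal \<bar>LBINT s=0..t. ps_eval q (exp (b * s) * x + wdet a b s + Wtil c b W s \<omega>)\<bar> \<partial>M)
            + (\<integral>\<^sup>+ \<omega>. ennreal \<bar>ps_eval q (exp (b * t) * x + wdet a b t + Wtil c b W t \<omega>)\<bar> \<partial>M)
         \<le> ennreal ((1 + T) * (A0 x + ZP + ZH))"
      using t by (intro EXP) auto
    also have "\<dots> \<le> ennreal (ps_abs rr \<bar>x\<bar> + (1 + T) * (ps_abs q (4 * K) + ZP + ZH))"
    proof (intro ennreal_leI)
      have "(1 + T) * (A0 x + ZP + ZH) = (1 + T) * ps_abs q (4 * Eb * \<bar>x\<bar>) + (1 + T) * (ps_abs q (4 * K) + ZP + ZH)"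
        by (simp add: A0_def algebra_simps)
      also have "(1 + T) * ps_abs q (4 * Eb * \<bar>x\<bar>) \<le> ps_abs rr \<bar>x\<bar>"
        using rr_abs[of "\<bar>x\<bar>"] Tpos C00 by (simp add: algebra_simps)
      finally show "(1 + T) * (A0 x + ZP + ZH) \<le> ps_abs rr \<bar>x\<bar> + (1 + T) * (ps_abs q (4 * K) + ZP + ZH)"
        by simp
    qed
    finally show "(\<integral>\<^sup>+ \<omega>. ennreal \<bar>LBINT s=0..t. ps_eval q (exp (b * s) * x + wdet a b s + Wtil c b W s \<omega>)\<bar> \<partial>M)
            + (\<integral>\<^sup>+ \<omega>. ennreal \<bar>ps_eval q (exp (b * t) * x + wdet a b t + Wtil c b W t \<omega>)\<bar> \<partial>M)
         \<le> ennreal (ps_abs rr \<bar>x\<bar> + (1 + T) * (ps_abs q (4 * K) + ZP + ZH))" .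
  qed
  show ?thesis using E1 E2 E3 by blast
qed


end
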